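(* Let $G$ be a claw-free graph and $C_0$ an even hole of $G$. If a vertex $\mathbf{t}$ lies in $\Gamma[C_0]$, then $\mathbf{t}\in\Gamma[C]$ for every even hole $C\in\langle C_0\rangle$.
   Context: A hole is an induced cycle of length $\ge4$; even hole: even length. Claw-free: no induced $K_{1,3}$. For a vertex set $U$, $\Gamma[U]=\bigcup_{\mathbf{j}\in U}(\Gamma(\mathbf{j})\cup\{\mathbf{j}\})$ is its closed neighbourhood. Single-vertex deformation: if $C$ is an even hole and $\mathbf{j}\notin C$ has $\Gamma_C(\mathbf{j})=\{\mathbf{u},\mathbf{k},\mathbf{v}\}$ with $\mathbf{u},\mathbf{v}$ the two neighbours of $\mathbf{k}$ in $C$, then $(C\setminus\{\mathbf{k}\})\cup\{\mathbf{j}\}$ is a single-vertex deformation of $C$. The deformation closure $\langle C_0\rangle$ is the smallest set of holes containing $C_0$ and closed under single-vertex deformations. *)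

theory Defs
  imports Main
begin

definition graph :: "'a set \<Rightarrow> ('a \<Rightarrow> 'a \<Rightarrow> bool) \<Rightarrow> bool" where
  "graph V E \<longleftrightarrow> (\<forall>x y. E x y \<longrightarrow> x \<in> V \<and> y \<in> V \<and> E y x \<and> x \<noteq> y)"

definition claw_free :: "'a set \<Rightarrow> ('a \<Rightarrow> 'a \<Rightarrow> bool) \<Rightarrow> bool" where
  "claw_free V E \<longleftrightarrow> \<not> (\<exists>a\<in>V. \<exists>b\<in>V. \<exists>c\<in>V. \<exists>d\<in>V.
      E a b \<and> E a c \<and> E a d \<and> b \<noteq> c \<and> b \<noteq> d \<and> c \<noteq> d \<and>
      \<not> E b c \<and> \<not> E b d \<and> \<not> E c d)"

definition hole :: "'a set \<Rightarrow> ('a \<Rightarrow> 'a \<Rightarrow> bool) \<Rightarrow> 'a set \<Rightarrow> bool" where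
  "hole V E C \<longleftrightarrow> C \<subseteq> V \<and> (\<exists>vs. distinct vs \<and> set vs = C \<and> length vs \<ge> 4 \<and>
      (\<forall>i<length vs. \<forall>j<length vs.
         E (vs ! i) (vs ! j) \<longleftrightarrow>
           (j = Suc i mod length vs \<or> i = Suc j mod length vs)))"

definition even_hole :: "'a set \<Rightarrow> ('a \<Rightarrow> 'a \<Rightarrow> bool) \<Rightarrow> 'a set \<Rightarrow> bool" where
  "even_hole V E C \<longleftrightarrow> hole V E C \<and> even (card C)"

definition nbrs_in :: "('a \<Rightarrow> 'a \<Rightarrow> bool) \<Rightarrow> 'a set \<Rightarrow> 'a \<Rightarrow> 'a set" where
  "nbrs_in E C j = {v \<in> C. E j v}"

definition closed_nbhd :: "('a \<Rightarrow> 'a \<Rightarrow> bool) \<Rightarrow> 'a set \<Rightarrow> 'a set" where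
  "closed_nbhd E U = (\<Union>j\<in>U. {v. E j v} \<union> {j})"

definition sv_deformation :: "'a set \<Rightarrow> ('a \<Rightarrow> 'a \<Rightarrow> bool) \<Rightarrow> 'a set \<Rightarrow> 'a set \<Rightarrow> bool" where
  "sv_deformation V E C C' \<longleftrightarrow> even_hole V E C \<and>
     (\<exists>j u k v. j \<in> V \<and> j \<notin> C \<and> k \<in> C \<and> u \<noteq> v \<and>
        nbrs_in E C k = {u, v} \<and> nbrs_in E C j = {u, k, v} \<and>
        C' = (C - {k}) \<union> {j})"

inductive_set deform_closure :: "'a set \<Rightarrow> ('a \<Rightarrow> 'a \<Rightarrow> bool) \<Rightarrow> 'a set \<Rightarrow> 'a set set"
  for V E C0 where
  base: "C0 \<in> deform_closure V E C0"
| step: "C \<in> deform_closure V E C0 \<Longrightarrow> sv_deformation V E C C' \<Longrightarrow> C' \<in> deform_closure V E C0"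

end

theory Submission
  imports Defs
begin

lemma hole_no_triangle:
  assumes "hole V E C" "x \<in> C" "y \<in> C" "z \<in> C" "E x y" "E y z" "E x z"
  shows False
proof -
  obtain vs where d: "distinct vs" "set vs = C" "length vs \<ge> 4"
    and adj: "\<forall>i<length vs. \<forall>j<length vs. E (vs ! i) (vs ! j) \<longleftrightarrow>
           (j = Suc i mod length vs \<or> i = Suc j mod length vs)"
    using assms(1) unfolding hole_def by blast
  define n where "n = length vs"
  obtain a where a: "a < n" "x = vs ! a" using assms(2) d(2) unfolding n_def by (metis in_set_conv_nth)
  obtain b where b: "b < n" "y = vs ! b" using assms(3) d(2) unfolding n_def by (metis in_set_conv_nth)
  obtain c where c: "c < n" "z = vs ! c" using assms(4) d(2) unfolding n_def by (metis in_set_conv_nth)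
  have m: "\<And>i. i < n \<Longrightarrow> Suc i mod n = (if Suc i = n then 0 else Suc i)"
    by auto
  have 1: "b = Suc a mod n \<or> a = Suc b mod n" using adj a b assms(5) unfolding n_def by blast
  have 2: "c = Suc b mod n \<or> b = Suc c mod n" using adj c b assms(6) unfolding n_def by blast
  have 3: "c = Suc a mod n \<or> a = Suc c mod n" using adj a c assms(7) unfolding n_def by blast
  have n4: "n \<ge> 4" using d(3) n_def by simp
  note 1[unfolded m[OF a(1)] m[OF b(1)]] 2[unfolded m[OF c(1)] m[OF b(1)]] 3[unfolded m[OF a(1)] m[OF c(1)]]
  then show False using a(1) b(1) c(1) n4
    by (auto split: if_splits)
qed

lemma claw:
  assumes "claw_free V E" "a \<in> V" "b \<in> V" "c \<in> V" "d \<in> V"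
    "E a b" "E a c" "E a d" "b \<noteq> c" "b \<noteq> d" "c \<noteq> d"
    "\<not> E b c" "\<not> E b d" "\<not> E c d"
  shows False
  using assms unfolding claw_free_def by blast

lemma step_pres:
  assumes g: "graph V E" and cf: "claw_free V E" and def: "sv_deformation V E C C'"
    and t: "t \<in> closed_nbhd E C"
  shows "t \<in> closed_nbhd E C'"
proof -
  obtain j u k v where eh: "even_hole V E C" and j: "j \<in> V" "j \<notin> C" and k: "k \<in> C" "u \<noteq> v"
    and nk: "nbrs_in E C k = {u, v}" and nj: "nbrs_in E C j = {u, k, v}"
    and C': "C' = (C - {k}) \<union> {j}"
    using def unfolding sv_deformation_def by blast
  have h: "hole V E C" using eh unfolding even_hole_def by simp
  have CV: "C \<subseteq> V" using h unfolding hole_def by simp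
  have "u \<in> nbrs_in E C k" "v \<in> nbrs_in E C k" using nk by simp_all
  then have u: "u \<in> C" "E k u" and v: "v \<in> C" "E k v" unfolding nbrs_in_def by simp_all
  have ku: "u \<noteq> k" "v \<noteq> k" using u(2) v(2) g unfolding graph_def by metis+
  have "k \<in> nbrs_in E C j" using nj by simp
  then have Ejk: "E j k" unfolding nbrs_in_def by simp
  have nuv: "\<not> E u v" using hole_no_triangle[OF h k(1) u(1) v(1)] u v by blast
  from t obtain c where c: "c \<in> C" "E c t \<or> t = c" unfolding closed_nbhd_def by blast
  show ?thesis
  proof (cases "c = k")
    case False
    then have "c \<in> C'" using C' c by blast
    then show ?thesis using c unfolding closed_nbhd_def by blast
  next
    case True
    show ?thesis
    proof (cases "t = k")
      case True
      have "j \<in> C'" using C' by blast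
      then show ?thesis using Ejk True unfolding closed_nbhd_def by blast
    next
      case tk: False
      then have Ekt: "E k t" using c True by blast
      show ?thesis
      proof (cases "t \<in> C")
        case True
        then have "t \<in> C'" using C' tk by blast
        then show ?thesis unfolding closed_nbhd_def by blast
      next
        case False
        have tV: "t \<in> V" using Ekt g unfolding graph_def by metis
        have "E t u \<or> E t v"
        proof (rule ccontr)
          assume "\<not> (E t u \<or> E t v)"
          moreover have "t \<noteq> u" "t \<noteq> v" using False u v by blast+
          moreover have "k \<in> V" "u \<in> V" "v \<in> V" using k u v CV by blast+
          ultimately show False using claw[OF cf, of k t u v] Ekt u(2) v(2) k(2) tV nuv
            by blast
        qed
        then have "E u t \<or> E v t" using g unfolding graph_def by metis
        moreover have "u \<in> C'" "v \<in> C'" using C' u v ku by blast+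
        ultimately show ?thesis unfolding closed_nbhd_def by blast
      qed
    qed
  qed
qed

theorem lemma4:
  assumes "graph V E" and "claw_free V E" and "even_hole V E C0"
    and "t \<in> closed_nbhd E C0"
    and "C \<in> deform_closure V E C0" and "even_hole V E C"
  shows "t \<in> closed_nbhd E C"
  using assms(5)
proof (induction rule: deform_closure.induct)
  case base
  then show ?case using assms(4) by simp
next
  case (step C C')
  then show ?case using step_pres[OF assms(1,2)] by blast
qed

end
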